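(* The edge generating series of the Dyck lattices is $$\sum_{n\ge0}\ell(\mathcal{D}_n)x^n=\frac{1-3x-(1-x)\sqrt{1-4x}}{2x\sqrt{1-4x}}.$$ Moreover, for every $n\ge2$, $$\ell(\mathcal{D}_n)=\frac12\binom{2n}{n}\frac{n-1}{n+1}=\binom{2n-1}{n-2},$$ and for every $n\ge1$ the Hasse index is $i(\mathcal{D}_n)=(n-1)/2$; in particular $i(\mathcal{D}_n)\sim n/2$.
   Context: Steps: $U=(1,1)$, $D=(1,-1)$. $\mathcal{D}_n$ is the set of Dyck paths of semi-length $n$ (lattice paths from $(0,0)$ to $(2n,0)$ with steps $U,D$ never going below the $x$-axis), partially ordered by $\gamma_1\le\gamma_2$ iff $\gamma_1$ lies weakly below $\gamma_2$. For a finite poset $P$, $\ell(P)$ is the number of edges of its Hasse diagram (i.e. the number of covering pairs), and the Hasse index is $i(P)=\ell(P)/|P|$. $a_n\sim b_n$ means $a_n/b_n\to1$. *)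

theory Defs
  imports Complex_Main "HOL-Library.Landau_Symbols"
begin

text \<open>A lattice path is a list of booleans: True = U = (1,1), False = D = (1,-1).
  height xs k is the height after the first k steps.\<close>
definition height :: "bool list \<Rightarrow> nat \<Rightarrow> int" where
  "height xs k = sum_list (map (\<lambda>b. if b then 1 else -1) (take k xs))"

definition dyck :: "nat \<Rightarrow> bool list set" where
  "dyck n = {xs. length xs = 2 * n \<and> (\<forall>k \<le> 2 * n. 0 \<le> height xs k) \<and> height xs (2 * n) = 0}"

definition path_le :: "bool list \<Rightarrow> bool list \<Rightarrow> bool" where
  "path_le xs ys = (\<forall>k. height xs k \<le> height ys k)"

definition covers :: "'a set \<Rightarrow> ('a \<Rightarrow> 'a \<Rightarrow> bool) \<Rightarrow> 'a \<Rightarrow> 'a \<Rightarrow> bool" where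
  "covers P le a b = (a \<in> P \<and> b \<in> P \<and> le a b \<and> a \<noteq> b \<and>
     \<not> (\<exists>c\<in>P. le a c \<and> le c b \<and> c \<noteq> a \<and> c \<noteq> b))"

definition hasse_edges :: "'a set \<Rightarrow> ('a \<Rightarrow> 'a \<Rightarrow> bool) \<Rightarrow> nat" where
  "hasse_edges P le = card {(a, b). covers P le a b}"

definition hasse_index :: "'a set \<Rightarrow> ('a \<Rightarrow> 'a \<Rightarrow> bool) \<Rightarrow> real" where
  "hasse_index P le = real (hasse_edges P le) / real (card P)"

definition ell_dyck :: "nat \<Rightarrow> nat" where
  "ell_dyck n = hasse_edges (dyck n) path_le"

end

theory Submission
  imports Defs "HOL-Analysis.Analysis" "HOL-Real_Asymp.Real_Asymp"
begin


abbreviation sg :: "bool \<Rightarrow> int" where "sg b \<equiv> (if b then 1 else -1)"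

lemma height_0[simp]: "height xs 0 = 0" by (simp add: height_def)

lemma height_Cons_Suc[simp]: "height (x # xs) (Suc k) = sg x + height xs k"
  by (simp add: height_def)

lemma height_Nil[simp]: "height [] k = 0" by (simp add: height_def)

lemma height_append: "height (xs @ ys) k = height xs k + height ys (k - length xs)"
  by (simp add: height_def)

lemma height_take: "height (take i b) k = height b (min i k)"
  by (simp add: height_def min.commute)

lemma height_drop: "height (drop i b) k = height b (i + k) - height b i"
proof -
  have "take (i+k) b = take i b @ take k (drop i b)"
    by (metis take_add)
  then show ?thesis by (simp add: height_def)
qed

lemma height_ge_len: "length xs \<le> k \<Longrightarrow> height xs k = height xs (length xs)"
  by (simp add: height_def)

lemma height_Suc: "k < length xs \<Longrightarrow> height xs (Suc k) = height xs k + sg (xs ! k)"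
  by (simp add: height_def take_Suc_conv_app_nth)

lemma height_parity: "k \<le> length xs \<Longrightarrow> even (height xs k + int k)"
proof (induction k)
  case 0 then show ?case by simp
next
  case (Suc k)
  then have "even (height xs k + int k)" by simp
  then show ?case using Suc.prems by (simp add: height_Suc)
qed

lemma heights_eq_imp_eq:
  assumes "length xs = length ys" "\<And>k. height xs k = height ys k"
  shows "xs = ys"
proof (rule nth_equalityI)
  show "length xs = length ys" by fact
  fix i assume "i < length xs"
  then have "sg (xs!i) = sg (ys!i)"
    using height_Suc[of i xs] height_Suc[of i ys] assms by simp
  then show "xs ! i = ys ! i" by (auto split: if_splits)
qed



lemma height_splice:
  assumes "i + 2 \<le> length a"
  shows "height (take i a @ x # y # drop (i+2) a) k =
    (if k \<le> i then height a k else if k = Suc i then height a i + sg x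
     else height a k - height a (i+2) + height a i + sg x + sg y)"
proof -
  have li: "length (take i a) = i" using assms by simp
  have e: "height (take i a @ x # y # drop (i+2) a) k = height a (min i k) + height (x # y # drop (i+2) a) (k - i)"
    by (simp only: height_append li height_take)
  show ?thesis
  proof (cases "k \<le> i")
    case True then show ?thesis unfolding e by (simp add: min_def)
  next
    case False
    show ?thesis
    proof (cases "k = Suc i")
      case True then show ?thesis unfolding e by simp
    next
      case False2: False
      define j where "j = k - i - 2"
      have j: "k = i + 2 + j" using False False2 unfolding j_def by arith
      have "k - i = Suc (Suc j)" using j by simp
      then show ?thesis unfolding e using j by (simp add: height_drop)
    qed
  qed
qed

lemma height_insert:
  assumes "i \<le> length b"
  shows "height (take i b @ x # y # drop i b) k =
    (if k \<le> i then height b k else if k = Suc i then height b i + sg x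
     else height b (k - 2) + sg x + sg y)"
proof -
  have li: "length (take i b) = i" using assms by simp
  have e: "height (take i b @ x # y # drop i b) k = height b (min i k) + height (x # y # drop i b) (k - i)"
    by (simp only: height_append li height_take)
  show ?thesis
  proof (cases "k \<le> i")
    case True then show ?thesis unfolding e by (simp add: min_def)
  next
    case False
    show ?thesis
    proof (cases "k = Suc i")
      case True then show ?thesis unfolding e by simp
    next
      case False2: False
      define j where "j = k - i - 2"
      have j: "k = i + 2 + j" using False False2 unfolding j_def by arith
      have "k - i = Suc (Suc j)" using j by simp
      then show ?thesis unfolding e using j by (simp add: height_drop)
    qed
  qed
qed


definition valleys :: "bool list \<Rightarrow> nat set" where
  "valleys a = {i. Suc i < length a \<and> \<not> a ! i \<and> a ! Suc i}"
definition peaks :: "bool list \<Rightarrow> nat set" where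
  "peaks a = {i. Suc i < length a \<and> a ! i \<and> \<not> a ! Suc i}"
definition swp :: "bool list \<Rightarrow> nat \<Rightarrow> bool list" where
  "swp a i = take i a @ True # False # drop (i+2) a"

lemma height_swp:
  assumes "i \<in> valleys a"
  shows "height (swp a i) k = height a k + (if k = Suc i then 2 else 0)"
proof -
  from assms have v: "Suc i < length a" "\<not> a ! i" "a ! Suc i" by (auto simp: valleys_def)
  have "height a (Suc i) = height a i - 1" using v height_Suc[of i a] by simp
  moreover have "height a (i+2) = height a i" using v height_Suc[of i a] height_Suc[of "Suc i" a] by simp
  ultimately show ?thesis unfolding swp_def using v
    by (subst height_splice) auto
qed

lemma length_swp: "i \<in> valleys a \<Longrightarrow> length (swp a i) = length a"
  by (auto simp: swp_def valleys_def)


lemma dyck_nonneg: "a \<in> dyck n \<Longrightarrow> 0 \<le> height a k"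
  unfolding dyck_def
  by (cases "k \<le> 2*n") (auto simp: height_ge_len)

lemma dyck_end: "a \<in> dyck n \<Longrightarrow> 2*n \<le> k \<Longrightarrow> height a k = 0"
  unfolding dyck_def by (auto simp: height_ge_len)

lemma dyck_iff: "a \<in> dyck n \<longleftrightarrow> length a = 2*n \<and> (\<forall>k. 0 \<le> height a k) \<and> height a (2*n) = 0"
  using dyck_nonneg unfolding dyck_def by blast

lemma swp_dyck: "a \<in> dyck n \<Longrightarrow> i \<in> valleys a \<Longrightarrow> swp a i \<in> dyck n"
  unfolding dyck_iff
proof -
  assume a: "length a = 2 * n \<and> (\<forall>k. 0 \<le> height a k) \<and> height a (2 * n) = 0" and v: "i \<in> valleys a"
  then have "Suc i < 2*n" by (auto simp: valleys_def)
  then show "length (swp a i) = 2 * n \<and> (\<forall>k. 0 \<le> height (swp a i) k) \<and> height (swp a i) (2 * n) = 0"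
  proof (intro conjI allI)
    show "length (swp a i) = 2 * n" using a v length_swp by metis
    fix k show "0 \<le> height (swp a i) k" unfolding height_swp[OF v] using a by simp
  next
    show "height (swp a i) (2 * n) = 0" unfolding height_swp[OF v] using a \<open>Suc i < 2*n\<close> by simp
  qed
qed

lemma swp_le: "i \<in> valleys a \<Longrightarrow> path_le a (swp a i)"
  by (simp add: path_le_def height_swp)

lemma swp_neq: "i \<in> valleys a \<Longrightarrow> swp a i \<noteq> a"
proof
  assume v: "i \<in> valleys a" and e: "swp a i = a"
  have "height (swp a i) (Suc i) = height a (Suc i) + 2" using height_swp[OF v, of "Suc i"] by simp
  then show False using e by simp
qed


lemma dyck_len: "a \<in> dyck n \<Longrightarrow> length a = 2*n" by (simp add: dyck_def)

lemma even_diff_lemma: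
  assumes "even ((x::int) + s)" "even (y + s)" shows "even (y - x)"
proof -
  have "y - x = (y + s) - (x + s)" by simp
  then show ?thesis using assms by simp
qed

lemma covers_swp:
  assumes a: "a \<in> dyck n" and v: "i \<in> valleys a"
  shows "covers (dyck n) path_le a (swp a i)"
  unfolding covers_def
proof (intro conjI)
  show "a \<in> dyck n" by (rule a)
  show "swp a i \<in> dyck n" by (rule swp_dyck[OF a v])
  show "path_le a (swp a i)" by (rule swp_le[OF v])
  show "a \<noteq> swp a i" using swp_neq[OF v] by simp
  show "\<not> (\<exists>c\<in>dyck n. path_le a c \<and> path_le c (swp a i) \<and> c \<noteq> a \<and> c \<noteq> swp a i)"
  proof
    assume "\<exists>c\<in>dyck n. path_le a c \<and> path_le c (swp a i) \<and> c \<noteq> a \<and> c \<noteq> swp a i"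
    then obtain c where c: "c \<in> dyck n" "path_le a c" "path_le c (swp a i)" "c \<noteq> a" "c \<noteq> swp a i"
      by blast
    have lens: "length c = length a" using dyck_len[OF c(1)] dyck_len[OF a] by simp
    have si: "Suc i \<le> length a" using v by (auto simp: valleys_def)
    have lo: "height a k \<le> height c k" for k using c(2) unfolding path_le_def by blast
    have hi: "height c k \<le> height a k + (if k = Suc i then 2 else 0)" for k
      using c(3) unfolding path_le_def height_swp[OF v] by blast
    have eq: "height c k = height a k" if "k \<noteq> Suc i" for k
      using lo[of k] hi[of k] that by simp
    have p1: "even (height a (Suc i) + int (Suc i))" using height_parity si by blast
    have p2: "even (height c (Suc i) + int (Suc i))" using height_parity[of "Suc i" c] si lens by simp
    have ev: "even (height c (Suc i) - height a (Suc i))" by (rule even_diff_lemma[OF p1 p2])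
    have "height c (Suc i) = height a (Suc i) \<or> height c (Suc i) = height a (Suc i) + 2"
    proof -
      from ev obtain t where t: "height c (Suc i) - height a (Suc i) = 2 * t" by (rule evenE)
      have "0 \<le> t" "t \<le> 1" using t lo[of "Suc i"] hi[of "Suc i"] by simp_all
      then have "t = 0 \<or> t = 1" by linarith
      then show ?thesis using t by auto
    qed
    then show False
    proof
      assume h: "height c (Suc i) = height a (Suc i)"
      have "c = a"
      proof (rule heights_eq_imp_eq)
        show "length c = length a" by (rule lens)
        fix k show "height c k = height a k" using h eq by (cases "k = Suc i") auto
      qed
      then show False using c by simp
    next
      assume h: "height c (Suc i) = height a (Suc i) + 2"
      have "c = swp a i"
      proof (rule heights_eq_imp_eq)
        show "length c = length (swp a i)" using lens length_swp[OF v] by simp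
        fix k show "height c k = height (swp a i) k" unfolding height_swp[OF v] using h eq by (cases "k = Suc i") auto
      qed
      then show False using c by simp
    qed
  qed
qed


lemma covers_imp:
  assumes cv: "covers (dyck n) path_le a b"
  shows "a \<in> dyck n \<and> (\<exists>i\<in>valleys a. b = swp a i)"
proof -
  from cv have a: "a \<in> dyck n" and b: "b \<in> dyck n" and le: "path_le a b" and ne: "a \<noteq> b"
    and nc: "\<not> (\<exists>c\<in>dyck n. path_le a c \<and> path_le c b \<and> c \<noteq> a \<and> c \<noteq> b)"
    unfolding covers_def by blast+
  have la: "length a = 2*n" using a dyck_len by blast
  have lb: "length b = 2*n" using b dyck_len by blast
  have lek: "height a k \<le> height b k" for k using le unfolding path_le_def by blast
  have "\<exists>k. height a k < height b k"
  proof (rule ccontr)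
    assume "\<not> ?thesis"
    then have "height a k = height b k" for k using lek[of k] by (meson order.not_eq_order_implies_strict)
    then have "a = b" using la lb heights_eq_imp_eq by simp
    then show False using ne by simp
  qed
  then obtain k0 where "height a k0 < height b k0" by blast
  from ex_has_least_nat[of "\<lambda>k. height a k < height b k" k0 "\<lambda>k. nat (height a k)", OF this]
  obtain k where kK: "height a k < height b k"
    and kmin: "\<And>k'. height a k' < height b k' \<Longrightarrow> nat (height a k) \<le> nat (height a k')"
    by blast
  have nna: "\<And>j. 0 \<le> height a j" using a dyck_nonneg by blast
  have kmin': "height a k \<le> height a k'" if "height a k' < height b k'" for k'
    using kmin[OF that] nna[of k] nna[of k'] by linarith
  have k0: "k \<noteq> 0" using kK by (cases k) auto
  have k2: "k < 2*n"
  proof (rule ccontr)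
    assume "\<not> k < 2*n" then show False using kK dyck_end[OF a, of k] dyck_end[OF b, of k] by simp
  qed
  have "even (height a k + int k)" using height_parity[of k a] k2 la by simp
  moreover have "even (height b k + int k)" using height_parity[of k b] k2 lb by simp
  ultimately have "even (height b k - height a k)" by (rule even_diff_lemma)
  then obtain t where t: "height b k - height a k = 2 * t" by (rule evenE)
  have "0 < t" using t kK by linarith
  then have "1 \<le> t" by simp
  then have d2: "height a k + 2 \<le> height b k" using t by linarith
  obtain j where kj: "k = Suc j" using k0 by (cases k) auto
  have hj: "height a k = height a j + sg (a ! j)" using height_Suc[of j a] kj k2 la by simp
  have hbj: "height b k = height b j + sg (b ! j)" using height_Suc[of j b] kj k2 lb by simp
  have aj: "\<not> a ! j"
  proof
    assume "a ! j"
    then have "height a j < height b j" "height a j < height a k" using hj hbj d2 by (simp_all split: if_splits)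
    then show False using kmin'[of j] by simp
  qed
  have hk: "height a (Suc k) = height a k + sg (a ! k)" using height_Suc[of k a] k2 la by simp
  have hbk: "height b (Suc k) = height b k + sg (b ! k)" using height_Suc[of k b] k2 lb by simp
  have ak: "a ! k"
  proof (rule ccontr)
    assume "\<not> a ! k"
    then have "height a (Suc k) < height b (Suc k)" "height a (Suc k) < height a k" using hk hbk d2 by (simp_all split: if_splits)
    then show False using kmin'[of "Suc k"] by simp
  qed
  have v: "j \<in> valleys a" using aj ak kj k2 la by (simp add: valleys_def)
  have "path_le (swp a j) b" unfolding path_le_def height_swp[OF v]
  proof
    fix m show "height a m + (if m = Suc j then 2 else 0) \<le> height b m"
      using lek[of m] d2 kj by simp
  qed
  then have "swp a j = b" using nc swp_dyck[OF a v] swp_le[OF v] swp_neq[OF v] by blast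
  then show ?thesis using a v by blast
qed

lemma covers_set: "{(a, b). covers (dyck n) path_le a b} = (\<lambda>(a, i). (a, swp a i)) ` Sigma (dyck n) valleys"
  using covers_imp covers_swp by fastforce


lemma finite_dyck: "finite (dyck n)"
proof -
  have "dyck n \<subseteq> {xs. set xs \<subseteq> UNIV \<and> length xs = 2*n}" by (auto simp: dyck_def)
  moreover have "finite {xs::bool list. set xs \<subseteq> UNIV \<and> length xs = 2*n}"
    by (rule finite_lists_length_eq) simp
  ultimately show ?thesis by (rule finite_subset)
qed

lemma finite_valleys: "finite (valleys a)"
  by (rule finite_subset[of _ "{..<length a}"]) (auto simp: valleys_def)

lemma finite_peaks: "finite (peaks a)"
  by (rule finite_subset[of _ "{..<length a}"]) (auto simp: peaks_def)

lemma swp_inj: "i \<in> valleys a \<Longrightarrow> j \<in> valleys a \<Longrightarrow> swp a i = swp a j \<Longrightarrow> i = j"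
  using height_swp[of i a "Suc i"] height_swp[of j a "Suc i"] by (auto split: if_splits)

lemma ell_sum: "ell_dyck n = (\<Sum>a\<in>dyck n. card (valleys a))"
proof -
  have "inj_on (\<lambda>(a, i). (a, swp a i)) (Sigma (dyck n) valleys)"
    by (auto simp: inj_on_def dest: swp_inj)
  then have "ell_dyck n = card (Sigma (dyck n) valleys)"
    unfolding ell_dyck_def hasse_edges_def covers_set by (rule card_image)
  also have "\<dots> = (\<Sum>a\<in>dyck n. card (valleys a))"
    using finite_dyck finite_valleys by (simp add: card_SigmaI)
  finally show ?thesis .
qed


definition pos :: "(bool \<Rightarrow> bool \<Rightarrow> bool) \<Rightarrow> bool list \<Rightarrow> nat set" where
  "pos P a = {i. Suc i < length a \<and> P (a ! i) (a ! Suc i)}"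

lemma mem_pos_Cons2: "i \<in> pos P (x # y # zs) \<longleftrightarrow> (i = 0 \<and> P x y) \<or> (\<exists>j. i = Suc j \<and> j \<in> pos P (y # zs))"
  by (cases i) (auto simp: pos_def)

lemma pos_Cons2: "pos P (x # y # zs) = (if P x y then insert 0 else id) (Suc ` pos P (y # zs))"
  by (rule set_eqI) (auto simp: mem_pos_Cons2)

lemma finite_pos: "finite (pos P a)"
  by (rule finite_subset[of _ "{..<length a}"]) (auto simp: pos_def)

lemma card_pos_Cons2: "card (pos P (x # y # zs)) = (if P x y then 1 else 0) + card (pos P (y # zs))"
  by (simp add: pos_Cons2 card_image finite_pos)

lemma pos_single: "pos P [x] = {}" by (simp add: pos_def)

lemma peaks_pos: "peaks a = pos (\<lambda>x y. x \<and> \<not> y) a" by (simp add: peaks_def pos_def)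
lemma valleys_pos: "valleys a = pos (\<lambda>x y. \<not> x \<and> y) a" by (simp add: valleys_def pos_def)

lemma peaks_valleys_diff:
  "int (card (peaks (x # zs))) - int (card (valleys (x # zs))) = (if x then 1 else 0) - (if last (x # zs) then 1 else 0)"
proof (induction zs arbitrary: x)
  case Nil then show ?case by (simp add: peaks_pos valleys_pos pos_single)
next
  case (Cons y zs)
  show ?case using Cons.IH[of y] unfolding peaks_pos valleys_pos card_pos_Cons2 by auto
qed

lemma dyck_peaks:
  assumes a: "a \<in> dyck n" and n: "n \<ge> 1"
  shows "card (peaks a) = card (valleys a) + 1"
proof -
  have la: "length a = 2*n" using a dyck_len by blast
  obtain x zs where xz: "a = x # zs" using la n by (cases a) auto
  have "height a 1 = sg x" using xz by simp
  then have x: "x" using dyck_nonneg[OF a, of 1] by (auto split: if_splits)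
  have "height a (2*n) = height a (2*n - 1) + sg (a ! (2*n - 1))"
    using height_Suc[of "2*n-1" a] la n by simp
  then have "\<not> a ! (2*n - 1)" using dyck_nonneg[OF a, of "2*n-1"] dyck_end[OF a, of "2*n"]
    by (auto split: if_splits)
  moreover have "a \<noteq> []" using la n by auto
  then have "last a = a ! (2*n - 1)" using la by (simp add: last_conv_nth)
  ultimately have "\<not> last a" by simp
  then show ?thesis using peaks_valleys_diff[of x zs] x xz by simp
qed


definition ins :: "bool list \<Rightarrow> nat \<Rightarrow> bool list" where
  "ins b i = take i b @ True # False # drop i b"

lemma ins_dyck:
  assumes b: "b \<in> dyck m" and i: "i \<le> 2*m"
  shows "ins b i \<in> dyck (Suc m)" "i \<in> peaks (ins b i)"
proof -
  have lb: "length b = 2*m" using b dyck_len by blast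
  have h: "height (ins b i) k = (if k \<le> i then height b k else if k = Suc i then height b i + 1
     else height b (k - 2))" for k
    unfolding ins_def using height_insert[of i b True False k] i lb by simp
  show "ins b i \<in> dyck (Suc m)" unfolding dyck_iff
    using lb i dyck_nonneg[OF b] dyck_end[OF b, of "2*m"] unfolding h
    by (auto simp: ins_def add_nonneg_pos)
  show "i \<in> peaks (ins b i)" using lb i by (auto simp: peaks_def ins_def nth_append)
qed

lemma ins_surj:
  assumes a: "a \<in> dyck (Suc m)" and p: "i \<in> peaks a"
  shows "(a, i) \<in> (\<lambda>(b, i). (ins b i, i)) ` (dyck m \<times> {..2*m})"
proof -
  have la: "length a = 2*m + 2" using a dyck_len by fastforce
  from p have si: "Suc i < length a" and ai: "a ! i" and ai1: "\<not> a ! Suc i" by (auto simp: peaks_def)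
  define b where "b = take i a @ drop (i+2) a"
  have lb: "length b = 2*m" using la si by (simp add: b_def)
  have tb: "take i b = take i a" "drop i b = drop (i+2) a" using si by (auto simp: b_def)
  have "a = take i a @ a ! i # a ! Suc i # drop (i+2) a"
    using si by (metis Cons_nth_drop_Suc Suc_lessD add_2_eq_Suc' append_take_drop_id)
  then have ab: "ins b i = a" using ai ai1 tb by (simp add: ins_def)
  have hb: "height a k = (if k \<le> i then height b k else if k = Suc i then height b i + 1
     else height b (k - 2))" for k
    using height_insert[of i b True False k] si lb ab la unfolding ins_def by simp
  have hb2: "height b j = (if j < i then height a j else height a (j + 2))" for j
    using hb[of j] hb[of "j+2"] by (auto split: if_splits)
  have "b \<in> dyck m" unfolding dyck_iff using lb hb2 dyck_nonneg[OF a] dyck_end[OF a, of "2*m+2"] la si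
    by auto
  moreover have "i \<le> 2*m" using si la by simp
  ultimately show ?thesis using ab by force
qed

lemma ins_inj: "inj_on (\<lambda>(b, i). (ins b i, i)) (dyck m \<times> {..2*m})"
proof (rule inj_onI, clarsimp)
  fix b i c
  assume b: "b \<in> dyck m" "c \<in> dyck m" "i \<le> 2*m" "ins b i = ins c i"
  then have "take i (ins b i) @ drop (i+2) (ins b i) = take i (ins c i) @ drop (i+2) (ins c i)" by simp
  moreover have "take i (ins b i) @ drop (i+2) (ins b i) = b" if "b \<in> dyck m" for b
    using that b(3) dyck_len[OF that] by (simp add: ins_def)
  ultimately show "b = c" using b by metis
qed

lemma peaks_sum: "(\<Sum>a\<in>dyck (Suc m). card (peaks a)) = (2*m+1) * card (dyck m)"
proof -
  have "(\<Sum>a\<in>dyck (Suc m). card (peaks a)) = card (Sigma (dyck (Suc m)) peaks)"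
    using finite_dyck finite_peaks by (simp add: card_SigmaI)
  also have "Sigma (dyck (Suc m)) peaks = (\<lambda>(b, i). (ins b i, i)) ` (dyck m \<times> {..2*m})"
    using ins_surj ins_dyck by fastforce
  also have "card \<dots> = card (dyck m \<times> {..2*m})" using ins_inj by (rule card_image)
  also have "\<dots> = (2*m+1) * card (dyck m)" by (simp add: card_cartesian_product)
  finally show ?thesis .
qed



definition S :: "nat \<Rightarrow> nat \<Rightarrow> bool list set" where
  "S h L = {xs. length xs = L \<and> (\<forall>k. 0 \<le> int h + height xs k) \<and> int h + height xs L = 0}"

lemma dyck_S: "dyck n = S 0 (2*n)"
  unfolding S_def using dyck_iff by auto

lemma height_lower: "- int k \<le> height xs k"
proof (induction k)
  case 0 then show ?case by simp
next
  case (Suc k)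
  show ?case
  proof (cases "k < length xs")
    case True then show ?thesis using Suc.IH by (simp add: height_Suc)
  next
    case False
    then have "height xs (Suc k) = height xs k" by (simp add: height_def)
    then show ?thesis using Suc.IH by simp
  qed
qed

lemma S_empty: assumes "L < h" shows "S h L = {}"
proof -
  { fix xs assume "xs \<in> S h L"
    then have "int h + height xs L = 0" by (simp add: S_def)
    moreover have "- int L \<le> height xs L" by (rule height_lower)
    ultimately have False using assms by linarith }
  then show ?thesis by blast
qed

lemma all_cons_iff: "(\<forall>k. 0 \<le> int h + height (x # ys) k) \<longleftrightarrow> (\<forall>k. 0 \<le> int h + sg x + height ys k)"
proof
  assume A: "\<forall>k. 0 \<le> int h + height (x # ys) k"
  show "\<forall>k. 0 \<le> int h + sg x + height ys k"
  proof
    fix k show "0 \<le> int h + sg x + height ys k" using A[rule_format, of "Suc k"] by (simp add: add.assoc)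
  qed
next
  assume A: "\<forall>k. 0 \<le> int h + sg x + height ys k"
  show "\<forall>k. 0 \<le> int h + height (x # ys) k"
  proof
    fix k show "0 \<le> int h + height (x # ys) k"
    proof (cases k)
      case 0 then show ?thesis by simp
    next
      case (Suc j) then show ?thesis using A[rule_format, of j] by (simp add: add.assoc)
    qed
  qed
qed


lemma mem_S_Cons: "x # ys \<in> S h (Suc L) \<longleftrightarrow> (x \<and> ys \<in> S (h+1) L) \<or> (\<not> x \<and> h > 0 \<and> ys \<in> S (h-1) L)"
proof -
  have "x # ys \<in> S h (Suc L) \<longleftrightarrow> length ys = L \<and> (\<forall>k. 0 \<le> int h + sg x + height ys k) \<and> int h + sg x + height ys L = 0"
    unfolding S_def mem_Collect_eq all_cons_iff by (simp add: add.assoc)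
  also have "\<dots> \<longleftrightarrow> (x \<and> ys \<in> S (h+1) L) \<or> (\<not> x \<and> h > 0 \<and> ys \<in> S (h-1) L)"
  proof (cases x)
    case True then show ?thesis by (simp add: S_def add.commute)
  next
    case False
    show ?thesis
    proof (cases "h > 0")
      case True
      then have "int (h - 1) = int h - 1" by simp
      then show ?thesis using False True by (simp add: S_def)
    next
      case F2: False
      then have "h = 0" by simp
      have "\<not> (0 \<le> int h + sg x + height ys 0)" using \<open>h = 0\<close> False by simp
      then show ?thesis using False F2 by blast
    qed
  qed
  finally show ?thesis .
qed

lemma S_Suc: "S h (Suc L) = Cons True ` S (h+1) L \<union> (if h > 0 then Cons False ` S (h-1) L else {})"
proof (rule set_eqI)
  fix xs
  show "xs \<in> S h (Suc L) \<longleftrightarrow> xs \<in> Cons True ` S (h+1) L \<union> (if h > 0 then Cons False ` S (h-1) L else {})"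
  proof (cases xs)
    case Nil then show ?thesis by (auto simp: S_def)
  next
    case (Cons x ys)
    show ?thesis unfolding Cons mem_S_Cons by (cases x) auto
  qed
qed


lemma finite_S: "finite (S h L)"
proof -
  have "S h L \<subseteq> {xs. set xs \<subseteq> UNIV \<and> length xs = L}" by (auto simp: S_def)
  moreover have "finite {xs::bool list. set xs \<subseteq> UNIV \<and> length xs = L}"
    by (rule finite_lists_length_eq) simp
  ultimately show ?thesis by (rule finite_subset)
qed

lemma card_S_Suc: "card (S h (Suc L)) = card (S (h+1) L) + (if h > 0 then card (S (h-1) L) else 0)"
proof -
  have c1: "card (Cons b ` S k L) = card (S k L)" for b k
    by (rule card_image) (simp add: inj_on_def)
  have fin: "finite (Cons b ` S k L)" for b k using finite_S by simp
  show ?thesis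
  proof (cases "h > 0")
    case True
    then have e: "S h (Suc L) = Cons True ` S (h+1) L \<union> Cons False ` S (h-1) L" by (simp add: S_Suc)
    have "Cons True ` S (h+1) L \<inter> Cons False ` S (h-1) L = {}" by auto
    then have "card (S h (Suc L)) = card (Cons True ` S (h+1) L) + card (Cons False ` S (h-1) L)"
      unfolding e using fin by (simp add: card_Un_disjoint)
    then show ?thesis using c1 True by simp
  next
    case False
    then have e: "S h (Suc L) = Cons True ` S (h+1) L" by (simp add: S_Suc)
    show ?thesis unfolding e using c1 False by simp
  qed
qed

lemma card_S_0: "card (S 0 0) = 1"
proof -
  have "S 0 0 = {[]}" by (auto simp: S_def)
  then show ?thesis by simp
qed

lemma card_S_u0: "card (S h h) = 1"
proof (induction h)
  case 0 then show ?case by (rule card_S_0)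
next
  case (Suc h)
  then show ?case using card_S_Suc[of "Suc h" h] S_empty[of h "Suc (Suc h)"] by simp
qed


lemma binom_rel1: "real (Suc u) * real (Suc M choose Suc u) = real (Suc M) * real (M choose u)"
  by (metis Suc_times_binomial_eq of_nat_mult mult.commute)

lemma binom_rel2: "real (M - u) * real (Suc M choose Suc u) = real (Suc M) * real (M choose Suc u)"
  using binomial_absorb_comp[of "Suc M" "Suc u"] by (metis diff_Suc_1 diff_Suc_Suc of_nat_mult)

lemma aux_frac:
  fixes P Q X Y Z :: real
  assumes "P \<noteq> 0" "Q \<noteq> 0" "X + Y * Q = Z * P"
  shows "X / (P * Q) + Y / P = Z / Q"
  using assms by (simp add: field_simps)

lemma ballot_step:
  fixes A B C h u M :: real
  assumes M: "M = h + 2*u + 2" and h: "h \<ge> 0" and u: "u \<ge> 0"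
    and r1: "(u+1) * C = (M+1) * A" and r2: "(h+u+2) * C = (M+1) * B"
  shows "A * (h + 3) / (h + u + 3) + B * (h + 1) / (h + u + 2) = C * (h + 2) / (h + u + 3)"
proof -
  have d: "M + 1 \<noteq> 0" "h+u+3 \<noteq> 0" "h+u+2 \<noteq> 0" using h u M by linarith+
  have A: "A = (u+1) * C / (M+1)" using r1 d by (simp add: field_simps)
  have B: "B = (h+u+2) * C / (M+1)" using r2 d by (simp add: field_simps)
  have e1: "B * (h + 1) / (h + u + 2) = (h+1) * C / (M+1)" using d unfolding B by simp
  have e2: "A * (h + 3) / (h + u + 3) = (u+1)*(h+3)*C / ((M+1) * (h+u+3))" unfolding A by simp
  have key: "(u+1)*(h+3)*C + (h+1) * C * (h+u+3) = (C * (h+2)) * (M+1)"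
    unfolding M by (simp add: algebra_simps)
  show ?thesis unfolding e1 e2 by (rule aux_frac[OF d(1,2) key])
qed

lemma ballot: "real (card (S h (h + 2*u))) = real ((h + 2*u) choose u) * (real h + 1) / (real h + real u + 1)"
proof (induction u arbitrary: h)
  case 0 then show ?case using card_S_u0 by simp
next
  case (Suc u)
  note IHu = Suc.IH
  show ?case
  proof (induction h)
    case 0
    have e: "0 + 2 * Suc u = Suc (1 + 2*u)" by simp
    have "card (S 0 (0 + 2 * Suc u)) = card (S 1 (1 + 2*u))" unfolding e card_S_Suc by simp
    then have "real (card (S 0 (0 + 2 * Suc u))) = real ((1 + 2*u) choose u) * 2 / (real u + 2)"
      using IHu[of 1] by (simp add: add.commute)
    moreover have "(2 + 2*u) choose (Suc u) = 2 * ((1 + 2*u) choose u)"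
    proof -
      have "(1 + 2*u) choose (Suc u) = (1 + 2*u) choose (1 + 2*u - Suc u)"
        by (rule binomial_symmetric) simp
      also have "1 + 2*u - Suc u = u" by simp
      finally have "(1 + 2*u) choose (Suc u) = (1 + 2*u) choose u" .
      moreover have "(2 + 2*u) choose (Suc u) = ((1 + 2*u) choose u) + ((1 + 2*u) choose (Suc u))"
        using binomial_Suc_Suc[of "1+2*u" u] by simp
      ultimately show ?thesis by simp
    qed
    then have "real ((2 + 2*u) choose (Suc u)) = 2 * real ((1 + 2*u) choose u)" by simp
    ultimately show ?case by (simp add: field_simps)
  next
    case (Suc h)
    define M where "M = h + 2 + 2*u"
    have e: "Suc h + 2 * Suc u = Suc M" by (simp add: M_def)
    have e2: "h + 2 * Suc u = h + 2 + 2 * u" by simp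
    have "card (S (Suc h) (Suc h + 2 * Suc u)) = card (S (h+2) M) + card (S h (h + 2 * Suc u))"
      unfolding e card_S_Suc by (simp add: M_def)
    then have r: "real (card (S (Suc h) (Suc h + 2 * Suc u))) =
       real (M choose u) * (real h + 3) / (real h + real u + 3)
       + real (M choose Suc u) * (real h + 1) / (real h + real u + 2)"
      using IHu[of "h+2"] Suc.IH unfolding e2 M_def by (simp add: add_ac)
    have MU: "real (M - u) = real h + real u + 2" by (simp add: M_def)
    have q1: "(real u + 1) * real (Suc M choose Suc u) = (real M + 1) * real (M choose u)"
      using binom_rel1[of u M] by (simp add: add.commute del: binomial_Suc_Suc)
    have q2: "(real h + real u + 2) * real (Suc M choose Suc u) = (real M + 1) * real (M choose Suc u)"
      using binom_rel2[of M u] unfolding MU by simp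
    have "real (card (S (Suc h) (Suc h + 2 * Suc u))) = real (Suc M choose Suc u) * (real h + 2) / (real h + real u + 3)"
      unfolding r by (rule ballot_step[OF _ _ _ q1 q2]) (simp_all add: M_def)
    then show ?case unfolding e by (simp add: add_ac)
  qed
qed

lemma card_dyck: "real (card (dyck n)) = real ((2*n) choose n) / (real n + 1)"
  using ballot[of 0 n] unfolding dyck_S by simp


lemma ell_0: "ell_dyck 0 = 0"
proof -
  have "dyck 0 = {[]}" by (auto simp: dyck_def)
  then show ?thesis unfolding ell_sum by (simp add: valleys_def)
qed

lemma ell_Suc: "ell_dyck (Suc m) + card (dyck (Suc m)) = (2*m+1) * card (dyck m)"
proof -
  have "(\<Sum>a\<in>dyck (Suc m). card (peaks a)) = (\<Sum>a\<in>dyck (Suc m). card (valleys a) + 1)"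
    by (rule sum.cong) (auto simp: dyck_peaks)
  also have "\<dots> = ell_dyck (Suc m) + card (dyck (Suc m))" unfolding sum.distrib ell_sum by simp
  finally show ?thesis using peaks_sum[of m] by simp
qed

lemma choose_step: "real (Suc j) * real (N choose Suc j) = (real N - real j) * real (N choose j)"
proof -
  have "Suc j * (Suc N choose Suc j) = Suc N * (N choose j)" by (rule Suc_times_binomial)
  then have h: "real (Suc j) * (real (N choose j) + real (N choose Suc j)) = real (Suc N) * real (N choose j)"
    by (metis binomial_Suc_Suc of_nat_add of_nat_mult)
  then show ?thesis by (simp add: algebra_simps)
qed

lemma central_step: "(real n + 1) * real ((2 * Suc n) choose Suc n) = 2 * (2 * real n + 1) * real ((2*n) choose n)"
proof -
  have "2 * Suc n = Suc (Suc (2*n))" by simp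
  then have e1: "real (Suc n) * real ((2 * Suc n) choose Suc n) = real (Suc (Suc (2*n))) * real (Suc (2*n) choose n)"
    by (metis Suc_times_binomial of_nat_mult)
  have e2: "real (Suc n) * real (Suc (2*n) choose Suc n) = real (Suc (2*n)) * real ((2*n) choose n)"
    by (metis Suc_times_binomial of_nat_mult)
  have e3: "Suc (2*n) choose Suc n = Suc (2*n) choose n"
    using binomial_symmetric[of "Suc n" "Suc (2*n)"] by simp
  have "(real n + 1) * ((real n + 1) * real ((2 * Suc n) choose Suc n)) = (real n + 1) * (2 * (2 * real n + 1) * real ((2*n) choose n))"
    using e1 e2 e3 by (simp add: algebra_simps)
  moreover have "real n + 1 \<noteq> 0" by simp
  ultimately show ?thesis by simp
qed

lemma ell_real: "real (ell_dyck (Suc m)) = real ((2 * Suc m) choose Suc m) * real m / (2 * (real m + 2))"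
proof -
  have c1: "real (card (dyck m)) = real ((2*m) choose m) / (real m + 1)" by (rule card_dyck)
  have c2: "real (card (dyck (Suc m))) = real ((2 * Suc m) choose Suc m) / (real m + 2)"
    using card_dyck[of "Suc m"] by (simp add: add_ac)
  have "real (ell_dyck (Suc m)) = (2 * real m + 1) * real (card (dyck m)) - real (card (dyck (Suc m)))"
    using ell_Suc[of m] by (metis add_diff_cancel_right' of_nat_add of_nat_mult of_nat_1 of_nat_numeral mult_2 of_nat_Suc)
  also have "\<dots> = real ((2 * Suc m) choose Suc m) / 2 - real ((2 * Suc m) choose Suc m) / (real m + 2)"
  proof -
    have "(2 * real m + 1) * (real ((2*m) choose m) / (real m + 1)) = real ((2 * Suc m) choose Suc m) / 2"
      using central_step[of m] by (simp add: field_simps del: binomial_Suc_Suc)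
    then show ?thesis unfolding c1 c2 by simp
  qed
  also have "\<dots> = real ((2 * Suc m) choose Suc m) * real m / (2 * (real m + 2))"
    by (simp add: field_simps del: binomial_Suc_Suc)
  finally show ?thesis .
qed


lemma part2a: "n \<ge> 1 \<Longrightarrow> real (ell_dyck n) = 1/2 * real ((2 * n) choose n) * (real n - 1) / (real n + 1)"
proof -
  assume "n \<ge> 1"
  then obtain m where n: "n = Suc m" by (cases n) auto
  show ?thesis unfolding n ell_real by (simp add: field_simps del: binomial_Suc_Suc)
qed

lemma part2b: "n \<ge> 2 \<Longrightarrow> ell_dyck n = (2 * n - 1) choose (n - 2)"
proof -
  assume "n \<ge> 2"
  then obtain k where n: "n = Suc (Suc k)" by (metis add_2_eq_Suc le_Suc_ex)
  have e1: "2 * n - 1 = Suc (2*k+2)" "n - 2 = k" using n by simp_all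
  have s1: "real (Suc (Suc k)) * real (Suc (Suc (2*k+2)) choose Suc (Suc k)) = real (Suc (Suc (2*k+2))) * real (Suc (2*k+2) choose Suc k)"
    by (metis Suc_times_binomial of_nat_mult)
  have s2: "real (Suc k) * real (Suc (2*k+2) choose Suc k) = (real (Suc (2*k+2)) - real k) * real (Suc (2*k+2) choose k)"
    by (rule choose_step)
  have e2: "2 * Suc (Suc k) = Suc (Suc (2*k+2))" by simp
  define D where "D = real (Suc (Suc (2*k+2)) choose Suc (Suc k))"
  define E where "E = real (Suc (2*k+2) choose Suc k)"
  define F where "F = real (Suc (2*k+2) choose k)"
  have s1': "(real k + 2) * D = (2 * real k + 4) * E" using s1 unfolding D_def E_def by (simp del: binomial_Suc_Suc add: algebra_simps)
  have s2': "(real k + 1) * E = (real k + 3) * F" using s2 unfolding E_def F_def by (simp del: binomial_Suc_Suc add: algebra_simps)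
  have "real (ell_dyck n) = D * (real k + 1) / (2 * (real k + 3))"
    unfolding n ell_real D_def e2 by (simp add: field_simps del: binomial_Suc_Suc)
  also have "D = 2 * E"
  proof -
    have "(real k + 2) * D = (real k + 2) * (2 * E)" using s1' by (simp add: algebra_simps)
    moreover have "real k + 2 \<noteq> 0" by simp
    ultimately show ?thesis by simp
  qed
  also have "2 * E * (real k + 1) / (2 * (real k + 3)) = F" using s2' by (simp add: field_simps)
  finally have "real (ell_dyck n) = real ((2 * n - 1) choose (n - 2))" unfolding e1 F_def .
  then show ?thesis by (simp only: of_nat_eq_iff)
qed

lemma aux_ratio: fixes D c x :: real shows "D \<noteq> 0 \<Longrightarrow> c \<noteq> 0 \<Longrightarrow> (D * x / (2 * c)) / (D / c) = x / 2"
  by (simp add: field_simps)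

lemma part3: "n \<ge> 1 \<Longrightarrow> hasse_index (dyck n) path_le = (real n - 1) / 2"
proof -
  assume "n \<ge> 1"
  then obtain m where n: "n = Suc m" by (cases n) auto
  define D where "D = real ((2 * Suc m) choose Suc m)"
  have D: "D > 0" unfolding D_def by (simp del: binomial_Suc_Suc)
  have c: "real (card (dyck n)) = D / (real m + 2)" unfolding n D_def using card_dyck[of "Suc m"] by (simp add: add_ac)
  have l: "real (ell_dyck n) = D * real m / (2 * (real m + 2))" unfolding n D_def by (rule ell_real)
  have "real m + 2 \<noteq> 0" by simp
  then have "real (ell_dyck n) / real (card (dyck n)) = real m / 2" unfolding c l using D \<open>real m + 2 \<noteq> 0\<close> by (intro aux_ratio) simp_all
  then show ?thesis unfolding hasse_index_def ell_dyck_def[symmetric] n by simp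
qed

lemma part4: "(\<lambda>n. hasse_index (dyck n) path_le) \<sim>[at_top] (\<lambda>n. real n / 2)"
proof -
  have "(\<lambda>n. (real n - 1) / 2) \<sim>[at_top] (\<lambda>n. real n / 2)" by real_asymp
  moreover have "eventually (\<lambda>n. (real n - 1) / 2 = hasse_index (dyck n) path_le) at_top"
    using eventually_ge_at_top[of "1::nat"] by eventually_elim (simp add: part3)
  ultimately show ?thesis by (rule asymp_equiv_transfer) simp
qed


lemma central_gchoose: "((-1/2::real) gchoose n) * (-4)^n = real ((2*n) choose n)"
proof (induction n)
  case 0 then show ?case by simp
next
  case (Suc n)
  define a :: real where "a = -1/2"
  have ab: "real (Suc n) * (a gchoose Suc n) = (a - real n) * (a gchoose n)"
    using gbinomial_absorption[of n a] gbinomial_absorb_comp[of a n] by simp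
  have "(real n + 1) * ((a gchoose Suc n) * (-4)^Suc n) = (real (Suc n) * (a gchoose Suc n)) * (-4)^Suc n"
    by (simp add: mult.assoc)
  also have "\<dots> = ((a - real n) * (a gchoose n)) * (-4)^Suc n" by (simp only: ab)
  also have "\<dots> = (a - real n) * (-4) * ((a gchoose n) * (-4)^n)" by (simp only: power_Suc mult_ac)
  also have "\<dots> = 2 * (2 * real n + 1) * real ((2*n) choose n)" using Suc.IH unfolding a_def by (simp add: algebra_simps)
  also have "\<dots> = (real n + 1) * real ((2 * Suc n) choose Suc n)" using central_step[of n] by simp
  finally have "(real n + 1) * ((a gchoose Suc n) * (-4)^Suc n) = (real n + 1) * real ((2 * Suc n) choose Suc n)" .
  moreover have "real n + 1 \<noteq> 0" by simp
  ultimately have "(a gchoose Suc n) * (-4)^Suc n = real ((2 * Suc n) choose Suc n)"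
    using mult_left_cancel by blast
  then show ?case unfolding a_def .
qed

lemma central_series:
  fixes x :: real assumes x: "\<bar>x\<bar> < 1/4"
  shows "(\<lambda>n. real ((2*n) choose n) * x^n) sums (1 / sqrt (1 - 4*x))"
proof -
  have "\<bar>(-4)*x\<bar> < 1" using x by simp
  from Generalised_Binomial_Theorem.gen_binomial_real[OF this, of "-1/2"]
  have "(\<lambda>n. ((-1/2) gchoose n) * ((-4)*x)^n) sums (1 + (-4)*x) powr (-1/2)" .
  moreover have "((-1/2) gchoose n) * ((-4)*x)^n = real ((2*n) choose n) * x^n" for n
  proof -
    have "((-1/2) gchoose n) * ((-4)*x)^n = (((-1/2::real) gchoose n) * (-4)^n) * x^n"
      by (simp only: power_mult_distrib mult.assoc)
    then show ?thesis by (simp only: central_gchoose)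
  qed
  moreover have "(1 + (-4)*x) powr (-1/2) = 1 / sqrt (1 - 4*x)"
  proof -
    have p: "0 \<le> 1 - 4*x" using x by simp
    have "(1 + -4*x) powr (-1/2) = 1 / ((1 - 4*x) powr (1/2))"
      using powr_minus_divide[of "1 - 4*x" "1/2"] by simp
    also have "\<dots> = 1 / sqrt (1 - 4*x)" using powr_half_sqrt[OF p] by simp
    finally show ?thesis .
  qed
  ultimately show ?thesis by simp
qed


lemma ell_coeff: "real (ell_dyck n) = 1/2 * real ((2 * Suc n) choose Suc n) - 3/2 * real ((2*n) choose n)
   + (if n = 0 then 1/2 else 0)"
proof (cases n)
  case 0 then show ?thesis by (simp add: ell_0)
next
  case (Suc m)
  define B where "B = real ((2*n) choose n)"
  define B1 where "B1 = real ((2 * Suc n) choose Suc n)"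
  have c: "(real n + 1) * B1 = 2 * (2 * real n + 1) * B" unfolding B_def B1_def by (rule central_step)
  have e: "real (ell_dyck n) = 1/2 * B * (real n - 1) / (real n + 1)" unfolding B_def
    using part2a[of n] Suc by simp
  have nz: "real n + 1 \<noteq> 0" by simp
  have B1: "B1 = 2 * (2 * real n + 1) * B / (real n + 1)" using c nz by (simp add: field_simps)
  have "real (ell_dyck n) = 1/2 * B1 - 3/2 * B" unfolding e B1 using nz by (simp add: field_simps)
  then show ?thesis using Suc unfolding B_def B1_def by simp
qed

lemma final_value:
  fixes s x :: real assumes "s \<noteq> 0" "x \<noteq> 0"
  shows "1/2 * ((1/s - 1) / x) - 3/2 * (1/s) + 1/2 = (1 - 3 * x - (1 - x) * s) / (2 * x * s)"
  using assms by (simp add: field_simps)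

lemma part1:
  fixes x :: real assumes x0: "x \<noteq> 0" and x: "\<bar>x\<bar> < 1/4"
  shows "(\<lambda>n. real (ell_dyck n) * x ^ n) sums
              ((1 - 3 * x - (1 - x) * sqrt (1 - 4 * x)) / (2 * x * sqrt (1 - 4 * x)))"
proof -
  define s where "s = sqrt (1 - 4*x)"
  have s0: "s \<noteq> 0" unfolding s_def using x by simp
  define B where "B n = real ((2*n) choose n)" for n
  have S0: "(\<lambda>n. B n * x^n) sums (1/s)" unfolding B_def s_def by (rule central_series[OF x])
  have "(\<lambda>n. B (Suc n) * x^(Suc n)) sums (1/s - 1)"
    using S0 unfolding sums_Suc_iff[of "\<lambda>n. B n * x^n"] by (simp add: B_def)
  then have "(\<lambda>n. B (Suc n) * x^(Suc n) / x) sums ((1/s - 1) / x)" by (rule sums_divide)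
  moreover have "B (Suc n) * x^(Suc n) / x = B (Suc n) * x^n" for n using x0 by simp
  ultimately have S1: "(\<lambda>n. B (Suc n) * x^n) sums ((1/s - 1) / x)" by simp
  have S2: "(\<lambda>n. if n = 0 then 1/2 else 0) sums (1/2 :: real)"
    using sums_single[of 0 "\<lambda>_. 1/2::real"] by simp
  have "(\<lambda>n. 1/2 * (B (Suc n) * x^n) - 3/2 * (B n * x^n) + (if n = 0 then 1/2 else 0)) sums
      (1/2 * ((1/s - 1) / x) - 3/2 * (1/s) + 1/2)"
    by (intro sums_add sums_diff sums_mult S0 S1 S2)
  moreover have "1/2 * (B (Suc n) * x^n) - 3/2 * (B n * x^n) + (if n = 0 then 1/2 else 0) = real (ell_dyck n) * x^n" for n
    unfolding ell_coeff B_def by (simp add: algebra_simps)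
  ultimately have "(\<lambda>n. real (ell_dyck n) * x^n) sums (1/2 * ((1/s - 1) / x) - 3/2 * (1/s) + 1/2)"
    by simp
  then show ?thesis unfolding final_value[OF s0 x0] unfolding s_def .
qed


theorem mainTheorem3:
  shows "(\<forall>x::real. x \<noteq> 0 \<and> \<bar>x\<bar> < 1/4 \<longrightarrow>
            (\<lambda>n. real (ell_dyck n) * x ^ n) sums
              ((1 - 3 * x - (1 - x) * sqrt (1 - 4 * x)) / (2 * x * sqrt (1 - 4 * x))))
       \<and> (\<forall>n::nat. n \<ge> 2 \<longrightarrow>
            real (ell_dyck n) = 1/2 * real ((2 * n) choose n) * (real n - 1) / (real n + 1)
          \<and> ell_dyck n = (2 * n - 1) choose (n - 2))
       \<and> (\<forall>n::nat. n \<ge> 1 \<longrightarrow> hasse_index (dyck n) path_le = (real n - 1) / 2)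
       \<and> (\<lambda>n. hasse_index (dyck n) path_le) \<sim>[at_top] (\<lambda>n. real n / 2)"
proof (intro conjI)
  show "\<forall>x::real. x \<noteq> 0 \<and> \<bar>x\<bar> < 1/4 \<longrightarrow>
            (\<lambda>n. real (ell_dyck n) * x ^ n) sums
              ((1 - 3 * x - (1 - x) * sqrt (1 - 4 * x)) / (2 * x * sqrt (1 - 4 * x)))"
    using part1 by blast
  show "\<forall>n::nat. n \<ge> 2 \<longrightarrow>
            real (ell_dyck n) = 1/2 * real ((2 * n) choose n) * (real n - 1) / (real n + 1)
          \<and> ell_dyck n = (2 * n - 1) choose (n - 2)"
  proof (intro allI impI conjI)
    fix n :: nat assume n: "n \<ge> 2"
    show "real (ell_dyck n) = 1/2 * real ((2 * n) choose n) * (real n - 1) / (real n + 1)"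
      by (rule part2a) (use n in simp)
    show "ell_dyck n = (2 * n - 1) choose (n - 2)" by (rule part2b[OF n])
  qed
  show "\<forall>n::nat. n \<ge> 1 \<longrightarrow> hasse_index (dyck n) path_le = (real n - 1) / 2"
    using part3 by blast
  show "(\<lambda>n. hasse_index (dyck n) path_le) \<sim>[at_top] (\<lambda>n. real n / 2)"
    by (rule part4)
qed

end
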